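(* Consider the algorithm ECCom described in the context, and fix an epoch $i$. If $f_N^{i'}+f_L^{i'}\ge 1/4$, then with high probability $f_N^{i}+f_L^{i}\ge 1/6$.
   Context: Setting. A dynamic system of IDs with at least $n_0$ good IDs at all times; "with high probability" means with probability at least $1-n_0^{-c'}$ for a desired constant $c'$ (relative to a lifetime of $O(n_0^{\gamma})$ events, $\gamma\ge1$ a constant). A committee runs algorithm ECCom: it maintains $\mathcal S_{\mathrm{old}}$, the set of IDs present after the most recent purge (start of the epoch), and $\mathcal S$, the current set of IDs. It uses a hash function $h'$, unknown to the IDs and behaving as a uniformly random function to $[0,1)$, and places an ID $v$ in the sample when $h'(v)\le c\log n_0/|\mathcal S_{\mathrm{old}}|$, where $c>0$ is a sufficiently large constant depending on $\gamma$. The sample set $\mathcal S'_{\mathrm{old}}$ consists of the sampled IDs of $\mathcal S_{\mathrm{old}}$ at the start of the epoch; the current sample set $\mathcal S'$ consists of the sampled IDs currently present. A purge is triggered when $|(\mathcal S'\cup\mathcal S'_{\mathrm{old}})\setminus(\mathcal S'\cap\mathcal S'_{\mathrm{old}})|\ge|\mathcal S'_{\mathrm{old}}|/4$. Notation. For epoch $i$: $f_N^i$ is the fraction (relative to $|\mathcal S_{\mathrm{old}}|$) of IDs that joined during the epoch and remain active, and $f_L^i$ is the fraction of IDs of $\mathcal S_{\mathrm{old}}$ that have left; $f_N^{i'}$ and $f_L^{i'}$ are the corresponding fractions for the sample sets (relative to $|\mathcal S'_{\mathrm{old}}|$). *)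

theory Defs
  imports "HOL-Probability.Probability"
begin

text \<open>Model of one epoch of ECCom. \<open>S_old\<close> is the set of IDs at the start of the epoch,
  \<open>S\<close> is the current set of IDs at some moment of the epoch.\<close>

definition samp_thr :: "real \<Rightarrow> nat \<Rightarrow> 'a set \<Rightarrow> real" where
  "samp_thr c n0 S_old = c * ln (real n0) / real (card S_old)"

definition sampled :: "real \<Rightarrow> nat \<Rightarrow> 'a set \<Rightarrow> ('a \<Rightarrow> real) \<Rightarrow> 'a set \<Rightarrow> 'a set" where
  "sampled c n0 S_old h A = {v \<in> A. h v \<le> samp_thr c n0 S_old}"

definition fN :: "'a set \<Rightarrow> 'a set \<Rightarrow> real" where
  "fN S_old S = real (card (S - S_old)) / real (card S_old)"

definition fL :: "'a set \<Rightarrow> 'a set \<Rightarrow> real" where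
  "fL S_old S = real (card (S_old - S)) / real (card S_old)"

definition fN' :: "real \<Rightarrow> nat \<Rightarrow> 'a set \<Rightarrow> ('a \<Rightarrow> real) \<Rightarrow> 'a set \<Rightarrow> real" where
  "fN' c n0 S_old h S =
     real (card (sampled c n0 S_old h S - sampled c n0 S_old h S_old))
       / real (card (sampled c n0 S_old h S_old))"

definition fL' :: "real \<Rightarrow> nat \<Rightarrow> 'a set \<Rightarrow> ('a \<Rightarrow> real) \<Rightarrow> 'a set \<Rightarrow> real" where
  "fL' c n0 S_old h S =
     real (card (sampled c n0 S_old h S_old - sampled c n0 S_old h S))
       / real (card (sampled c n0 S_old h S_old))"

definition hash_space :: "'a set \<Rightarrow> ('a \<Rightarrow> real) measure" where
  "hash_space U = PiM U (\<lambda>_. uniform_measure lborel {0..<1::real})"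

end

theory Submission
  imports Defs
begin


abbreviation Un01 :: "real measure" where "Un01 \<equiv> uniform_measure lborel {0..<1::real}"

lemma Un01_prob: "prob_space Un01"
  by (rule prob_space_uniform_measure) auto

lemma Un01_le: assumes "p \<ge> 0" shows "measure Un01 {..p} \<ge> min p 1"
proof -
  interpret prob_space Un01 by (rule Un01_prob)
  have "emeasure Un01 {..p} = emeasure lborel ({0..<1} \<inter> {..p})"
    by (subst emeasure_uniform_measure) (auto simp: divide_ennreal_def)
  also have "\<dots> \<ge> emeasure lborel {0..<min p 1}"
    by (intro emeasure_mono) auto
  finally have "ennreal (min p 1) \<le> ennreal (measure Un01 {..p})"
    using assms by (simp add: emeasure_eq_measure)
  then show ?thesis by (simp add: ennreal_le_iff)
qed

lemma Un01_compl: "measure Un01 {p<..} = 1 - measure Un01 {..p}"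
proof -
  interpret prob_space Un01 by (rule Un01_prob)
  have "{p<..} = space Un01 - {..p}" by auto
  moreover have "measure Un01 (space Un01 - {..p}) = 1 - measure Un01 {..p}" by (rule prob_compl) auto
  ultimately show ?thesis by simp
qed

lemma Un01_factor:
  fixes l w p :: real
  shows "(\<integral>\<^sup>+x. ennreal (exp (l * (if x \<le> p then w else 0))) \<partial>Un01)
     = ennreal (exp (l*w) * measure Un01 {..p} + (1 - measure Un01 {..p}))"
proof -
  interpret prob_space Un01 by (rule Un01_prob)
  have "(\<integral>\<^sup>+x. ennreal (exp (l * (if x \<le> p then w else 0))) \<partial>Un01)
     = (\<integral>\<^sup>+x. ennreal (exp (l*w)) * indicator {..p} x + 1 * indicator {p<..} x \<partial>Un01)"
    by (intro nn_integral_cong) (auto simp: indicator_def)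
  also have "\<dots> = ennreal (exp (l*w)) * emeasure Un01 {..p} + 1 * emeasure Un01 {p<..}"
    by (subst nn_integral_add) (auto simp: nn_integral_cmult_indicator)
  also have "\<dots> = ennreal (exp (l*w) * measure Un01 {..p} + (1 - measure Un01 {..p}))"
  proof -
    define q where "q = measure Un01 {..p}"
    have q: "0 \<le> q" "q \<le> 1" unfolding q_def by (rule measure_nonneg, rule prob_le_1)
    have "emeasure Un01 {..p} = ennreal q" "emeasure Un01 {p<..} = ennreal (1 - q)"
      unfolding q_def by (simp_all only: emeasure_eq_measure Un01_compl)
    then show ?thesis unfolding q_def[symmetric] using q
      by (simp add: ennreal_mult[symmetric] ennreal_plus[symmetric] del: ennreal_plus)
  qed
  finally show ?thesis .
qed

lemma comp_meas: assumes "v \<in> U" shows "(\<lambda>h. h v) \<in> borel_measurable (PiM U (\<lambda>_. Un01))"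
proof -
  have "(\<lambda>h. h v) \<in> measurable (PiM U (\<lambda>_. Un01)) Un01"
    using assms by (rule measurable_component_singleton)
  moreover have "measurable (PiM U (\<lambda>_. Un01)) Un01 = measurable (PiM U (\<lambda>_. Un01)) borel"
    by (rule measurable_cong_sets) (simp_all only: sets_uniform_measure sets_lborel)
  ultimately show ?thesis by simp
qed
lemma pred1: assumes "v \<in> U" shows "Measurable.pred (PiM U (\<lambda>_. Un01)) (\<lambda>h. h v \<le> p)"
proof -
  have "Measurable.pred (PiM U (\<lambda>_. Un01)) (\<lambda>h. h v \<in> {..p})"
    by (rule pred_sets2[OF _ comp_meas[OF assms]]) simp
  then show ?thesis by simp
qed
lemma predW: assumes "finite U" shows "Measurable.pred (PiM U (\<lambda>_. Un01)) (\<lambda>h. \<forall>v\<in>U. (h v \<le> p) = (v \<in> W))"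
  using assms by (intro pred_intros_finite pred_intros_logic pred1 measurable_const) auto
lemma set_meas:
  fixes U :: "'a set" and p :: real
  assumes "finite U"
  shows "{h \<in> space (PiM U (\<lambda>_. Un01)). Q {v\<in>U. h v \<le> p}} \<in> sets (PiM U (\<lambda>_. Un01))"
proof -
  have eq: "{h \<in> space (PiM U (\<lambda>_. Un01)). Q {v\<in>U. h v \<le> p}}
     = {h \<in> space (PiM U (\<lambda>_. Un01)). \<exists>W\<in>Pow U. Q W \<and> (\<forall>v\<in>U. (h v \<le> p) = (v \<in> W))}"
  proof (intro Collect_cong conj_cong refl iffI)
    fix h assume "Q {v\<in>U. h v \<le> p}"
    then show "\<exists>W\<in>Pow U. Q W \<and> (\<forall>v\<in>U. (h v \<le> p) = (v \<in> W))"
      by (intro bexI[of _ "{v\<in>U. h v \<le> p}"]) auto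
  next
    fix h assume "\<exists>W\<in>Pow U. Q W \<and> (\<forall>v\<in>U. (h v \<le> p) = (v \<in> W))"
    then obtain W where W: "W \<subseteq> U" "Q W" "\<forall>v\<in>U. (h v \<le> p) = (v \<in> W)" by auto
    have "{v\<in>U. h v \<le> p} = W" using W(1,3) by auto
    then show "Q {v\<in>U. h v \<le> p}" using W(2) by simp
  qed
  have "Measurable.pred (PiM U (\<lambda>_. Un01)) (\<lambda>h. \<exists>W\<in>Pow U. Q W \<and> (\<forall>v\<in>U. (h v \<le> p) = (v \<in> W)))"
    using assms by (intro pred_intros_finite pred_intros_logic predW measurable_const) auto
  then show ?thesis unfolding eq by (simp add: pred_def)
qed

lemma lin_aux: fixes X Y Z a b m :: real
  assumes "X \<le> (69/400) * a" "Y \<le> (6/25) * b" "(1/21) * (m - a) \<le> Z" "0 \<le> a" "0 \<le> b" "a + b < m/6"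
  shows "X + Y - Z \<le> - m / 200"
  using assms by simp

lemma gen_aux: fixes A B C Z r :: real shows "A + B - Z \<le> r \<Longrightarrow> C = -Z \<Longrightarrow> A + B + C \<le> r" by simp

lemma num_bound:
  fixes a b m :: real
  assumes "0 \<le> a" "0 \<le> b" "a + b < m / 6" "a \<le> m"
  shows "(exp (3/20) - 1) * a + (exp (4/20) - 1) * b + (exp (-1/20) - 1) * (m - a) \<le> - m / 200"
proof -
  have e3: "exp (3/20::real) \<le> 1 + 3/20 + (3/20)^2" by (rule exp_bound) auto
  have e4: "exp (4/20::real) \<le> 1 + 4/20 + (4/20)^2" by (rule exp_bound) auto
  have "1 + 1/20 \<le> exp (1/20::real)" by (rule exp_ge_add_one_self)
  then have "inverse (exp (1/20::real)) \<le> inverse (1 + 1/20)"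
    by (intro le_imp_inverse_le) auto
  then have em: "exp (-1/20::real) \<le> 20/21" by (simp add: exp_minus)
  have 1: "(exp (3/20) - 1) * a \<le> (69/400) * a" using e3 assms by (intro mult_right_mono) (auto simp: power2_eq_square)
  have 2: "(exp (4/20) - 1) * b \<le> (6/25) * b" using e4 assms by (intro mult_right_mono) (auto simp: power2_eq_square)
  have 3: "(1/21) * (m - a) \<le> (1 - exp (-1/20)) * (m - a)" using em assms by (intro mult_right_mono) auto
  have "(exp (3/20) - 1) * a + (exp (4/20) - 1) * b - (1 - exp (-1/20)) * (m - a) \<le> - m / 200"
    by (rule lin_aux[OF 1 2 3]) (use assms in auto)
  moreover have "(exp (-1/20) - 1) * (m - a) = - ((1 - exp (-1/20)) * (m - a))"
    by (metis minus_diff_eq mult_minus_left)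
  ultimately show ?thesis by (rule gen_aux)
qed

lemma card_sum_helper:
  assumes "finite U" "X \<subseteq> U"
  shows "(\<Sum>v\<in>U. of_bool (v \<in> X \<and> P v) :: real) = real (card {v\<in>X. P v})"
proof -
  have e: "U \<inter> {v. v \<in> X \<and> P v} = {v\<in>X. P v}" using assms by auto
  have "(\<Sum>v\<in>U. of_bool (v \<in> X \<and> P v) :: real) = real (card (U \<inter> {v. v \<in> X \<and> P v}))"
    using assms(1) by (induction U rule: finite_induct) (auto simp: Int_insert_left)
  then show ?thesis by (simp only: e)
qed


lemma set_meas_core:
  fixes U S0 S1 :: "'a set" and p :: real
  assumes fin: "finite U" and s0: "S0 \<subseteq> U" and s1: "S1 \<subseteq> U"
  shows "{h \<in> space (PiM U (\<lambda>_. Un01)).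
       real (card {v\<in>S0\<inter>S1. h v \<le> p}) \<le> 3 * real (card {v\<in>S0-S1. h v \<le> p}) + 4 * real (card {v\<in>S1-S0. h v \<le> p})} \<in> sets (PiM U (\<lambda>_. Un01))"
proof -
  define Q where "Q = (\<lambda>W. real (card (S0\<inter>S1\<inter>W)) \<le> 3 * real (card ((S0-S1)\<inter>W)) + 4 * real (card ((S1-S0)\<inter>W)))"
  have e1: "\<And>h. {v\<in>S0\<inter>S1. h v \<le> p} = S0\<inter>S1\<inter>{v\<in>U. h v \<le> p}" using s0 by auto
  have e2: "\<And>h. {v\<in>S0-S1. h v \<le> p} = (S0-S1)\<inter>{v\<in>U. h v \<le> p}" using s0 by auto
  have e3: "\<And>h. {v\<in>S1-S0. h v \<le> p} = (S1-S0)\<inter>{v\<in>U. h v \<le> p}" using s1 by auto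
  have "{h \<in> space (PiM U (\<lambda>_. Un01)).
       real (card {v\<in>S0\<inter>S1. h v \<le> p}) \<le> 3 * real (card {v\<in>S0-S1. h v \<le> p}) + 4 * real (card {v\<in>S1-S0. h v \<le> p})}
     = {h \<in> space (PiM U (\<lambda>_. Un01)). Q {v\<in>U. h v \<le> p}}"
    unfolding Q_def by (simp only: e1 e2 e3)
  then show ?thesis using set_meas[OF fin, of Q p] by simp
qed

lemma core:
  fixes U S0 S1 :: "'a set" and p :: real
  assumes fin: "finite U" and s0: "S0 \<subseteq> U" and s1: "S1 \<subseteq> U" and m: "card S0 > 0"
    and small: "real (card (S1 - S0)) + real (card (S0 - S1)) < real (card S0) / 6"
    and AA: "A \<subseteq> {h \<in> space (PiM U (\<lambda>_. Un01)).
       real (card {v\<in>S0\<inter>S1. h v \<le> p}) \<le> 3 * real (card {v\<in>S0-S1. h v \<le> p}) + 4 * real (card {v\<in>S1-S0. h v \<le> p})}"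
  shows "emeasure (PiM U (\<lambda>_. Un01)) A \<le> ennreal (exp (- (measure Un01 {..p} * real (card S0) / 200)))"
  using AA
proof -
  have "emeasure (PiM U (\<lambda>_. Un01)) {h \<in> space (PiM U (\<lambda>_. Un01)).
       real (card {v\<in>S0\<inter>S1. h v \<le> p}) \<le> 3 * real (card {v\<in>S0-S1. h v \<le> p}) + 4 * real (card {v\<in>S1-S0. h v \<le> p})}
     \<le> ennreal (exp (- (measure Un01 {..p} * real (card S0) / 200)))"
proof -
  interpret ps: prob_space Un01 by (rule Un01_prob)
  interpret P: product_sigma_finite "\<lambda>_::'a. Un01"
    by (simp add: product_sigma_finite_def ps.sigma_finite_measure_axioms)
  define M where "M = PiM U (\<lambda>_. Un01)"
  define Ev where "Ev = {h \<in> space M.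
       real (card {v\<in>S0\<inter>S1. h v \<le> p}) \<le> 3 * real (card {v\<in>S0-S1. h v \<le> p}) + 4 * real (card {v\<in>S1-S0. h v \<le> p})}"
  define q where "q = measure Un01 {..p}"
  have q: "0 \<le> q" "q \<le> 1" unfolding q_def by (rule measure_nonneg, rule ps.prob_le_1)
  define Q where "Q = (\<lambda>W. real (card (S0\<inter>S1\<inter>W)) \<le> 3 * real (card ((S0-S1)\<inter>W)) + 4 * real (card ((S1-S0)\<inter>W)))"
  have "Ev = {h \<in> space M. Q {v\<in>U. h v \<le> p}}"
  proof -
    have e1: "\<And>h. {v\<in>S0\<inter>S1. h v \<le> p} = S0\<inter>S1\<inter>{v\<in>U. h v \<le> p}" using s0 by auto
    have e2: "\<And>h. {v\<in>S0-S1. h v \<le> p} = (S0-S1)\<inter>{v\<in>U. h v \<le> p}" using s0 by auto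
    have e3: "\<And>h. {v\<in>S1-S0. h v \<le> p} = (S1-S0)\<inter>{v\<in>U. h v \<le> p}" using s1 by auto
    show ?thesis unfolding Ev_def Q_def by (simp only: e1 e2 e3)
  qed
  then have Ev_meas: "Ev \<in> sets M" unfolding M_def using set_meas[OF fin] by simp
  have sub: "S0-S1 \<subseteq> U" "S1-S0 \<subseteq> U" "S0\<inter>S1 \<subseteq> U" using s0 s1 by auto
  define l :: real where "l = 1/20"
  define w where "w = (\<lambda>v. 3 * of_bool (v \<in> S0-S1) + 4 * of_bool (v \<in> S1-S0) - of_bool (v \<in> S0\<inter>S1) :: real)"
  define f where "f = (\<lambda>v x. ennreal (exp (l * (if x \<le> p then w v else 0))))"
  have sumeq: "(\<Sum>v\<in>U. (if h v \<le> p then w v else 0)) =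
      3 * real (card {v\<in>S0-S1. h v \<le> p}) + 4 * real (card {v\<in>S1-S0. h v \<le> p}) - real (card {v\<in>S0\<inter>S1. h v \<le> p})" for h
  proof -
    have "(\<Sum>v\<in>U. (if h v \<le> p then w v else 0)) = (\<Sum>v\<in>U. 3 * of_bool (v \<in> S0-S1 \<and> h v \<le> p) + 4 * of_bool (v \<in> S1-S0 \<and> h v \<le> p) - of_bool (v \<in> S0\<inter>S1 \<and> h v \<le> p) :: real)"
      by (intro sum.cong) (auto simp: w_def)
    also have "\<dots> = 3 * (\<Sum>v\<in>U. of_bool (v \<in> S0-S1 \<and> h v \<le> p)) + 4 * (\<Sum>v\<in>U. of_bool (v \<in> S1-S0 \<and> h v \<le> p)) - (\<Sum>v\<in>U. of_bool (v \<in> S0\<inter>S1 \<and> h v \<le> p) :: real)"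
      by (simp add: sum_subtractf sum.distrib sum_distrib_left del: sum_of_bool_eq)
    also have "\<dots> = 3 * real (card {v\<in>S0-S1. h v \<le> p}) + 4 * real (card {v\<in>S1-S0. h v \<le> p}) - real (card {v\<in>S0\<inter>S1. h v \<le> p})"
      by (simp only: card_sum_helper[OF fin sub(1)] card_sum_helper[OF fin sub(2)] card_sum_helper[OF fin sub(3)])
    finally show ?thesis .
  qed
  have pw: "indicator Ev h \<le> (\<Prod>v\<in>U. f v (h v))" if "h \<in> space M" for h
  proof -
    have "(\<Prod>v\<in>U. f v (h v)) = ennreal (\<Prod>v\<in>U. exp (l * (if h v \<le> p then w v else 0)))"
      unfolding f_def by (rule prod_ennreal) simp
    also have "\<dots> = ennreal (exp (l * (\<Sum>v\<in>U. (if h v \<le> p then w v else 0))))"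
      using fin by (simp add: exp_sum sum_distrib_left)
    finally have eq: "(\<Prod>v\<in>U. f v (h v)) = ennreal (exp (l * (\<Sum>v\<in>U. (if h v \<le> p then w v else 0))))" .
    show ?thesis
    proof (cases "h \<in> Ev")
      case True
      then have "0 \<le> (\<Sum>v\<in>U. (if h v \<le> p then w v else 0))" unfolding sumeq Ev_def by auto
      then have "1 \<le> exp (l * (\<Sum>v\<in>U. (if h v \<le> p then w v else 0)))" by (simp add: l_def)
      then show ?thesis using True eq by simp
    qed simp
  qed
  have fmeas: "f v \<in> borel_measurable Un01" for v unfolding f_def by measurable
  have "emeasure M Ev = (\<integral>\<^sup>+h. indicator Ev h \<partial>M)" using Ev_meas by simp
  also have "\<dots> \<le> (\<integral>\<^sup>+h. (\<Prod>v\<in>U. f v (h v)) \<partial>M)"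
    by (intro nn_integral_mono pw)
  also have "\<dots> = (\<Prod>v\<in>U. integral\<^sup>N Un01 (f v))"
    unfolding M_def using fin fmeas by (intro P.product_nn_integral_prod) auto
  also have "\<dots> = (\<Prod>v\<in>U. ennreal (exp (l * w v) * q + (1 - q)))"
    unfolding f_def q_def by (simp only: Un01_factor)
  also have "\<dots> = ennreal (\<Prod>v\<in>U. exp (l * w v) * q + (1 - q))"
    using q by (intro prod_ennreal) auto
  also have "\<dots> \<le> ennreal (\<Prod>v\<in>U. exp (q * (exp (l * w v) - 1)))"
  proof (intro ennreal_leI prod_mono conjI)
    fix v
    show "0 \<le> exp (l * w v) * q + (1 - q)" using q by auto
    have "1 + q * (exp (l * w v) - 1) \<le> exp (q * (exp (l * w v) - 1))" by (rule exp_ge_add_one_self)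
    then show "exp (l * w v) * q + (1 - q) \<le> exp (q * (exp (l * w v) - 1))" by (simp add: algebra_simps)
  qed
  also have "\<dots> = ennreal (exp (q * (\<Sum>v\<in>U. exp (l * w v) - 1)))"
    using fin by (simp add: exp_sum sum_distrib_left)
  also have "\<dots> \<le> ennreal (exp (- (q * real (card S0) / 200)))"
  proof -
    have "(\<Sum>v\<in>U. exp (l * w v) - 1) = (\<Sum>v\<in>U. (exp (3/20) - 1) * of_bool (v \<in> S0-S1 \<and> True) + (exp (4/20) - 1) * of_bool (v \<in> S1-S0 \<and> True) + (exp (-1/20) - 1) * of_bool (v \<in> S0\<inter>S1 \<and> True))"
      by (intro sum.cong) (auto simp: w_def l_def)
    also have "\<dots> = (exp (3/20) - 1) * (\<Sum>v\<in>U. of_bool (v \<in> S0-S1 \<and> True)) + (exp (4/20) - 1) * (\<Sum>v\<in>U. of_bool (v \<in> S1-S0 \<and> True)) + (exp (-1/20) - 1) * (\<Sum>v\<in>U. of_bool (v \<in> S0\<inter>S1 \<and> True))"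
      by (simp add: sum.distrib sum_distrib_left del: sum_of_bool_eq)
    also have "\<dots> = (exp (3/20) - 1) * real (card {v\<in>S0-S1. True}) + (exp (4/20) - 1) * real (card {v\<in>S1-S0. True}) + (exp (-1/20) - 1) * real (card {v\<in>S0\<inter>S1. True})"
      by (simp only: card_sum_helper[OF fin sub(1)] card_sum_helper[OF fin sub(2)] card_sum_helper[OF fin sub(3)])
    also have "\<dots> = (exp (3/20) - 1) * real (card (S0-S1)) + (exp (4/20) - 1) * real (card (S1-S0)) + (exp (-1/20) - 1) * (real (card S0) - real (card (S0-S1)))"
    proof -
      have "card (S0 \<inter> S1) + card (S0 - S1) = card S0"
        using fin s0 by (metis card_Int_Diff finite_subset)
      then have "real (card (S0 \<inter> S1)) + real (card (S0 - S1)) = real (card S0)" by (metis of_nat_add)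
      then have c: "real (card (S0 \<inter> S1)) = real (card S0) - real (card (S0 - S1))" by linarith
      have t: "\<And>X::'a set. {v\<in>X. True} = X" by simp
      show ?thesis by (simp only: t c)
    qed
    also have "\<dots> \<le> - real (card S0) / 200"
      by (rule num_bound) (use small in \<open>auto intro: card_mono simp: \<close>)
    finally have "(\<Sum>v\<in>U. exp (l * w v) - 1) \<le> - real (card S0) / 200" .
    then have "q * (\<Sum>v\<in>U. exp (l * w v) - 1) \<le> q * (- real (card S0) / 200)"
      using q by (intro mult_left_mono) auto
    then show ?thesis by (intro ennreal_leI) simp
  qed
  finally have fin: "emeasure M Ev \<le> ennreal (exp (- (q * real (card S0) / 200)))" .
  show ?thesis using fin by (simp only: M_def Ev_def q_def)
qed
  moreover have "emeasure (PiM U (\<lambda>_. Un01)) A \<le> emeasure (PiM U (\<lambda>_. Un01)) {h \<in> space (PiM U (\<lambda>_. Un01)).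
       real (card {v\<in>S0\<inter>S1. h v \<le> p}) \<le> 3 * real (card {v\<in>S0-S1. h v \<le> p}) + 4 * real (card {v\<in>S1-S0. h v \<le> p})}"
    by (rule emeasure_mono[OF AA]) (rule set_meas_core[OF fin s0 s1])
  ultimately show ?thesis by (rule order_trans[rotated])
qed



lemma per_t:
  fixes S_old S1 U :: "'a set" and c :: real and n0 :: nat
  assumes fin: "finite U" and s0: "S_old \<subseteq> U" and s1: "S1 \<subseteq> U" and n0: "2 \<le> n0"
    and m: "n0 \<le> card S_old" and c: "c > 0" and cl: "c * ln (real n0) \<le> real n0"
  shows "{h \<in> space (hash_space U). fN' c n0 S_old h S1 + fL' c n0 S_old h S1 \<ge> 1/4 \<and> fN S_old S1 + fL S_old S1 < 1/6} \<in> sets (hash_space U)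
     \<and> measure (hash_space U) {h \<in> space (hash_space U). fN' c n0 S_old h S1 + fL' c n0 S_old h S1 \<ge> 1/4 \<and> fN S_old S1 + fL S_old S1 < 1/6} \<le> real n0 powr (-c/200)"
proof -
  define Et where "Et = {h \<in> space (hash_space U). fN' c n0 S_old h S1 + fL' c n0 S_old h S1 \<ge> 1/4 \<and> fN S_old S1 + fL S_old S1 < 1/6}"
  define p where "p = samp_thr c n0 S_old"
  have samp: "\<And>h A. sampled c n0 S_old h A = {v\<in>A. h v \<le> p}" by (simp add: sampled_def p_def)
  have hs: "hash_space U = PiM U (\<lambda>_. Un01)" by (simp add: hash_space_def)
  interpret M: prob_space "PiM U (\<lambda>_::'a. Un01)" by (intro prob_space_PiM Un01_prob)
  define Q where "Q = (\<lambda>W. 1/4 \<le> real (card (S1\<inter>W - S_old\<inter>W)) / real (card (S_old\<inter>W)) + real (card (S_old\<inter>W - S1\<inter>W)) / real (card (S_old\<inter>W)) \<and> fN S_old S1 + fL S_old S1 < 1/6)"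
  have ea: "\<And>h. {v\<in>S1. h v \<le> p} = S1 \<inter> {v\<in>U. h v \<le> p}" using s1 by auto
  have eb: "\<And>h. {v\<in>S_old. h v \<le> p} = S_old \<inter> {v\<in>U. h v \<le> p}" using s0 by auto
  have EtQ: "Et = {h \<in> space (PiM U (\<lambda>_. Un01)). Q {v\<in>U. h v \<le> p}}"
    unfolding Et_def Q_def hs fN'_def fL'_def samp by (simp only: ea eb)
  have meas: "Et \<in> sets (PiM U (\<lambda>_. Un01))" unfolding EtQ by (rule set_meas[OF fin])
  have bound: "measure (PiM U (\<lambda>_. Un01)) Et \<le> real n0 powr (-c/200)"
  proof (cases "fN S_old S1 + fL S_old S1 < 1/6")
    case False
    then have "Et = {}" unfolding Et_def by auto
    then show ?thesis by simp
  next
    case True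
    have mpos: "0 < real (card S_old)" using m n0 by simp
    have small: "real (card (S1 - S_old)) + real (card (S_old - S1)) < real (card S_old) / 6"
    proof -
      have "(real (card (S1 - S_old)) + real (card (S_old - S1))) / real (card S_old) < 1/6"
        using True unfolding fN_def fL_def by (simp add: add_divide_distrib)
      then show ?thesis using mpos by (simp add: divide_simps)
    qed
    have finS0: "finite S_old" using fin s0 finite_subset by blast
    have sub: "Et \<subseteq> {h \<in> space (PiM U (\<lambda>_. Un01)). real (card {v\<in>S_old\<inter>S1. h v \<le> p}) \<le> 3 * real (card {v\<in>S_old-S1. h v \<le> p}) + 4 * real (card {v\<in>S1-S_old. h v \<le> p})}"
    proof
      fix h assume h: "h \<in> Et"
      define x where "x = real (card {v\<in>S1-S_old. h v \<le> p})"
      define y where "y = real (card {v\<in>S_old-S1. h v \<le> p})"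
      define z where "z = real (card {v\<in>S_old\<inter>S1. h v \<le> p})"
      have xyz: "0 \<le> x" "0 \<le> y" "0 \<le> z" unfolding x_def y_def z_def by auto
      have e1: "{v\<in>S1. h v \<le> p} - {v\<in>S_old. h v \<le> p} = {v\<in>S1-S_old. h v \<le> p}" by auto
      have e2: "{v\<in>S_old. h v \<le> p} - {v\<in>S1. h v \<le> p} = {v\<in>S_old-S1. h v \<le> p}" by auto
      have so: "real (card {v\<in>S_old. h v \<le> p}) = y + z"
      proof -
        have "{v\<in>S_old. h v \<le> p} = {v\<in>S_old-S1. h v \<le> p} \<union> {v\<in>S_old\<inter>S1. h v \<le> p}" by auto
        moreover have "card ({v\<in>S_old-S1. h v \<le> p} \<union> {v\<in>S_old\<inter>S1. h v \<le> p}) = card {v\<in>S_old-S1. h v \<le> p} + card {v\<in>S_old\<inter>S1. h v \<le> p}"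
          by (rule card_Un_disjoint) (use finS0 in auto)
        ultimately show ?thesis unfolding y_def z_def by simp
      qed
      have hsp: "h \<in> space (PiM U (\<lambda>_. Un01))" using h unfolding Et_def hs by simp
      have "1/4 \<le> fN' c n0 S_old h S1 + fL' c n0 S_old h S1" using h unfolding Et_def by simp
      then have cond: "1/4 \<le> x / (y+z) + y / (y+z)"
        unfolding fN'_def fL'_def samp e1 e2 so x_def[symmetric] y_def[symmetric] .
      have pos: "y + z > 0"
      proof (rule ccontr)
        assume "\<not> y + z > 0"
        then have "y + z = 0" using xyz by linarith
        then show False using cond by simp
      qed
      have "1/4 \<le> (x + y) / (y + z)" using cond by (simp add: add_divide_distrib)
      then have "y + z \<le> 4 * (x + y)" using pos by (simp add: divide_simps)
      then have "z \<le> 3 * y + 4 * x" by (simp add: algebra_simps)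
      then show "h \<in> {h \<in> space (PiM U (\<lambda>_. Un01)). real (card {v\<in>S_old\<inter>S1. h v \<le> p}) \<le> 3 * real (card {v\<in>S_old-S1. h v \<le> p}) + 4 * real (card {v\<in>S1-S_old. h v \<le> p})}"
        using hsp unfolding x_def y_def z_def by simp
    qed
    have em: "emeasure (PiM U (\<lambda>_. Un01)) Et \<le> ennreal (exp (- (measure Un01 {..p} * real (card S_old) / 200)))"
      by (rule core[OF fin s0 s1 _ small sub]) (use mpos in simp)
    have p0: "0 \<le> p" unfolding p_def samp_thr_def using c n0 by simp
    have pm: "p * real (card S_old) = c * ln (real n0)" unfolding p_def samp_thr_def using mpos by simp
    have q: "measure Un01 {..p} \<ge> min p 1" by (rule Un01_le[OF p0])
    have "min p 1 * real (card S_old) \<le> measure Un01 {..p} * real (card S_old)"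
      using q mpos by (intro mult_right_mono) auto
    moreover have "c * ln (real n0) \<le> min p 1 * real (card S_old)"
    proof (cases "p \<le> 1")
      case True then show ?thesis using pm by simp
    next
      case False then show ?thesis using cl m by simp
    qed
    ultimately have "c * ln (real n0) \<le> measure Un01 {..p} * real (card S_old)" by linarith
    then have "exp (- (measure Un01 {..p} * real (card S_old) / 200)) \<le> exp (- (c * ln (real n0)) / 200)"
      by simp
    also have "\<dots> = real n0 powr (-c/200)" using n0 by (simp add: powr_def)
    finally have "emeasure (PiM U (\<lambda>_. Un01)) Et \<le> ennreal (real n0 powr (-c/200))"
      using em by (meson ennreal_leI order_trans)
    then show ?thesis by (simp add: M.emeasure_eq_measure)
  qed
  show ?thesis using meas bound unfolding Et_def hs by simp
qed


theorem lemma6: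
  fixes \<gamma> c' K :: real
  assumes "\<gamma> \<ge> 1" and "c' > 0" and "K > 0"
  shows "\<exists>c0>0. \<forall>c\<ge>c0. \<exists>N0::nat. \<forall>n0\<ge>N0. \<forall>(S_old :: 'a set) (S :: nat \<Rightarrow> 'a set) (T :: nat).
     finite S_old \<longrightarrow> card S_old \<ge> n0 \<longrightarrow> (\<forall>t<T. finite (S t) \<and> card (S t) \<ge> n0) \<longrightarrow>
     real T \<le> K * real n0 powr \<gamma> \<longrightarrow>
     (let U = S_old \<union> (\<Union>t<T. S t);
          E = {h \<in> space (hash_space U). \<exists>t<T.
                 fN' c n0 S_old h (S t) + fL' c n0 S_old h (S t) \<ge> 1/4 \<and>
                 fN S_old (S t) + fL S_old (S t) < 1/6}
      in E \<in> sets (hash_space U) \<and> measure (hash_space U) E \<le> real n0 powr (-c'))"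
proof -
  define c0 where "c0 = 200 * (\<gamma> + c' + 1)"
  have c0pos: "c0 > 0" using assms by (simp add: c0_def)
  have "\<forall>c\<ge>c0. \<exists>N0::nat. \<forall>n0\<ge>N0. \<forall>(S_old :: 'a set) (S :: nat \<Rightarrow> 'a set) (T :: nat).
     finite S_old \<longrightarrow> card S_old \<ge> n0 \<longrightarrow> (\<forall>t<T. finite (S t) \<and> card (S t) \<ge> n0) \<longrightarrow>
     real T \<le> K * real n0 powr \<gamma> \<longrightarrow>
     (let U = S_old \<union> (\<Union>t<T. S t);
          E = {h \<in> space (hash_space U). \<exists>t<T.
                 fN' c n0 S_old h (S t) + fL' c n0 S_old h (S t) \<ge> 1/4 \<and>
                 fN S_old (S t) + fL S_old (S t) < 1/6}
      in E \<in> sets (hash_space U) \<and> measure (hash_space U) E \<le> real n0 powr (-c'))"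
  proof (intro allI impI)
    fix c assume cc: "c \<ge> c0"
    have cpos: "c > 0" using cc c0pos by linarith
    define N0 where "N0 = nat \<lceil>4 * c^2 + K\<rceil> + 2"
    show "\<exists>N0::nat. \<forall>n0\<ge>N0. \<forall>(S_old :: 'a set) (S :: nat \<Rightarrow> 'a set) (T :: nat).
     finite S_old \<longrightarrow> card S_old \<ge> n0 \<longrightarrow> (\<forall>t<T. finite (S t) \<and> card (S t) \<ge> n0) \<longrightarrow>
     real T \<le> K * real n0 powr \<gamma> \<longrightarrow>
     (let U = S_old \<union> (\<Union>t<T. S t);
          E = {h \<in> space (hash_space U). \<exists>t<T.
                 fN' c n0 S_old h (S t) + fL' c n0 S_old h (S t) \<ge> 1/4 \<and>
                 fN S_old (S t) + fL S_old (S t) < 1/6}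
      in E \<in> sets (hash_space U) \<and> measure (hash_space U) E \<le> real n0 powr (-c'))"
    proof (intro exI[of _ N0] allI impI)
      fix n0 :: nat and S_old :: "'a set" and S :: "nat \<Rightarrow> 'a set" and T :: nat
      assume n0N: "N0 \<le> n0" and finS: "finite S_old" and card: "n0 \<le> card S_old"
        and St: "\<forall>t<T. finite (S t) \<and> n0 \<le> card (S t)" and TK: "real T \<le> K * real n0 powr \<gamma>"
      have n0_2: "2 \<le> n0" using n0N unfolding N0_def by simp
      have n0big: "4 * c^2 + K \<le> real n0"
      proof -
        have a: "4 * c^2 + K \<le> real (nat \<lceil>4 * c^2 + K\<rceil>)" by (rule real_nat_ceiling_ge)
        have "nat \<lceil>4 * c^2 + K\<rceil> \<le> n0" using n0N unfolding N0_def by linarith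
        then have "real (nat \<lceil>4 * c^2 + K\<rceil>) \<le> real n0" by (simp only: of_nat_le_iff)
        then show ?thesis using a by (rule order_trans[rotated])
      qed
      have Kn: "K \<le> real n0" using n0big zero_le_power2[of c] by linarith
      have cl: "c * ln (real n0) \<le> real n0"
      proof -
        have npos: "0 < real n0" using n0_2 by simp
        have "(2*c)^2 \<le> real n0" using n0big assms by (simp add: power_mult_distrib)
        then have sq: "2 * c \<le> sqrt (real n0)" using cpos by (simp add: real_le_rsqrt)
        have "ln (sqrt (real n0)) \<le> sqrt (real n0) - 1" using npos by (intro ln_le_minus_one) simp
        moreover have "ln (sqrt (real n0)) = ln (real n0) / 2" using npos by (simp add: ln_sqrt)
        ultimately have "ln (real n0) \<le> 2 * sqrt (real n0)" by linarith
        then have "c * ln (real n0) \<le> c * (2 * sqrt (real n0))" using cpos by (intro mult_left_mono) auto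
        also have "\<dots> = (2 * c) * sqrt (real n0)" by simp
        also have "\<dots> \<le> sqrt (real n0) * sqrt (real n0)" using sq by (intro mult_right_mono) auto
        also have "\<dots> = real n0" using npos by simp
        finally show ?thesis .
      qed
      define U where "U = S_old \<union> (\<Union>t<T. S t)"
      have finU: "finite U" unfolding U_def using finS St by auto
      have s0: "S_old \<subseteq> U" unfolding U_def by auto
      have s1: "\<And>t. t < T \<Longrightarrow> S t \<subseteq> U" unfolding U_def by auto
      define Et where "Et = (\<lambda>t. {h \<in> space (hash_space U). fN' c n0 S_old h (S t) + fL' c n0 S_old h (S t) \<ge> 1/4 \<and> fN S_old (S t) + fL S_old (S t) < 1/6})"
      have pt: "Et t \<in> sets (hash_space U) \<and> measure (hash_space U) (Et t) \<le> real n0 powr (-c/200)" if "t < T" for t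
        unfolding Et_def by (rule per_t[OF finU s0 s1[OF that] n0_2 card cpos cl])
      have Eeq: "{h \<in> space (hash_space U). \<exists>t<T.
                 fN' c n0 S_old h (S t) + fL' c n0 S_old h (S t) \<ge> 1/4 \<and>
                 fN S_old (S t) + fL S_old (S t) < 1/6} = (\<Union>t\<in>{..<T}. Et t)"
        unfolding Et_def by auto
      interpret M: prob_space "hash_space U" unfolding hash_space_def by (intro prob_space_PiM Un01_prob)
      have Emeas: "(\<Union>t\<in>{..<T}. Et t) \<in> sets (hash_space U)" using pt by auto
      have "measure (hash_space U) (\<Union>t\<in>{..<T}. Et t) \<le> (\<Sum>t\<in>{..<T}. measure (hash_space U) (Et t))"
        using pt by (intro M.finite_measure_subadditive_finite) auto
      also have "\<dots> \<le> (\<Sum>t\<in>{..<T}. real n0 powr (-c/200))" using pt by (intro sum_mono) auto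
      also have "\<dots> = real T * real n0 powr (-c/200)" by simp
      also have "\<dots> \<le> K * real n0 powr \<gamma> * real n0 powr (-c/200)"
        using TK by (intro mult_right_mono) auto
      also have "\<dots> = K * real n0 powr (\<gamma> - c/200)"
        by (simp add: powr_add[symmetric])
      also have "\<dots> \<le> K * real n0 powr (-c' - 1)"
      proof -
        have "\<gamma> - c/200 \<le> -c' - 1" using cc unfolding c0_def by simp
        then have "real n0 powr (\<gamma> - c/200) \<le> real n0 powr (-c' - 1)"
          using n0_2 by (intro powr_mono) auto
        then show ?thesis using assms by (intro mult_left_mono) auto
      qed
      also have "\<dots> = (K / real n0) * real n0 powr (-c')"
        using n0_2 by (simp add: powr_diff powr_minus divide_simps)
      also have "\<dots> \<le> 1 * real n0 powr (-c')"
        using Kn n0_2 by (intro mult_right_mono) auto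
      finally have "measure (hash_space U) (\<Union>t\<in>{..<T}. Et t) \<le> real n0 powr (-c')" by simp
      then show "let U = S_old \<union> (\<Union>t<T. S t);
          E = {h \<in> space (hash_space U). \<exists>t<T.
                 fN' c n0 S_old h (S t) + fL' c n0 S_old h (S t) \<ge> 1/4 \<and>
                 fN S_old (S t) + fL S_old (S t) < 1/6}
      in E \<in> sets (hash_space U) \<and> measure (hash_space U) E \<le> real n0 powr (-c')"
        unfolding Let_def U_def[symmetric] Eeq using Emeas by simp
    qed
  qed
  then show ?thesis using c0pos by blast
qed

end
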